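(* Let $n\ge3$, $j\in\{1,\dots,n-2\}$, $N\in\mathbb S^{n-1}$, and let $K\subseteq N^\perp$ be a compact convex set. Let $u\in\mathbb S^{n-1}\setminus\{\pm N\}$ and $\tilde u:=\frac{u|N^\perp}{|u|N^\perp|}$, and suppose $h_K$ is twice differentiable at $\tilde u$. Then $h_K$ is twice differentiable at $u$ and $$s_j(K,u)=\frac{1-\frac{j}{n-1}}{\langle u,\tilde u\rangle^j}\,s_j^{N^\perp}(K,\tilde u).$$
   Context: $h_K(x)=\max_{y\in K}\langle x,y\rangle$ on $\mathbb R^n$; $u|N^\perp$ is the orthogonal projection onto $N^\perp$. At a point $u\in\mathbb S^{n-1}$ where $h_K$ is twice differentiable, $s_j(K,u)=\binom{n-1}{j}^{-1}\sigma_j(\lambda_1,\dots,\lambda_{n-1})$, where $\lambda_i$ are the eigenvalues of $(D_{e_i}D_{e_k}h_K(u))_{i,k=1}^{n-1}$ for an orthonormal basis $e_1,\dots,e_{n-1}$ of $u^\perp$ and $\sigma_j$ is the $j$-th elementary symmetric polynomial. Regarding $K$ as a compact convex set in the $(n-1)$-dimensional space $N^\perp$, $s_j^{N^\perp}(K,\tilde u)=\binom{n-2}{j}^{-1}\sigma_j(\mu_1,\dots,\mu_{n-2})$, where $\mu_i$ are the eigenvalues of $(D_{e_i}D_{e_k}h_K(\tilde u))_{i,k=1}^{n-2}$ for an orthonormal basis $e_1,\dots,e_{n-2}$ of $N^\perp\cap\tilde u^\perp$. *)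

theory Defs
  imports "HOL-Analysis.Analysis" "Jordan_Normal_Form.Char_Poly"
begin

definition supp_fun :: "(real^'n) set \<Rightarrow> real^'n \<Rightarrow> real" where
  "supp_fun K x = Sup ((\<lambda>y. x \<bullet> y) ` K)"

definition grad :: "(real^'n \<Rightarrow> real) \<Rightarrow> real^'n \<Rightarrow> real^'n" where
  "grad h x = (\<chi> k. frechet_derivative h (at x) (axis k 1))"

definition twice_diff_at :: "(real^'n \<Rightarrow> real) \<Rightarrow> real^'n \<Rightarrow> bool" where
  "twice_diff_at h x \<longleftrightarrow> (\<forall>\<^sub>F y in at x. h differentiable at y) \<and> h differentiable at x
      \<and> grad h differentiable at x"

definition DD :: "(real^'n \<Rightarrow> real) \<Rightarrow> real^'n \<Rightarrow> real^'n \<Rightarrow> real^'n \<Rightarrow> real" where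
  "DD h x v w = frechet_derivative (\<lambda>y. frechet_derivative h (at y) w) (at x) v"

definition onb :: "(real^'n) set \<Rightarrow> nat \<Rightarrow> (nat \<Rightarrow> real^'n) \<Rightarrow> bool" where
  "onb W m e \<longleftrightarrow> (\<forall>i<m. e i \<in> W) \<and> (\<forall>i<m. \<forall>k<m. e i \<bullet> e k = (if i = k then 1 else 0))
      \<and> span (e ` {..<m}) = W"

definition hess_mat :: "(real^'n \<Rightarrow> real) \<Rightarrow> real^'n \<Rightarrow> (real^'n) set \<Rightarrow> nat \<Rightarrow> real mat" where
  "hess_mat h x W m = (let e = (SOME e. onb W m e) in mat m m (\<lambda>(i,k). DD h x (e i) (e k)))"

definition eigvals :: "real mat \<Rightarrow> real list" where
  "eigvals A = sorted_list_of_multiset (proots (char_poly A))"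

definition esym :: "nat \<Rightarrow> real list \<Rightarrow> real" where
  "esym j xs = (\<Sum>S\<in>{S. S \<subseteq> {..<length xs} \<and> card S = j}. \<Prod>i\<in>S. xs ! i)"

definition s_gen :: "nat \<Rightarrow> (real^'n) set \<Rightarrow> real^'n \<Rightarrow> (real^'n) set \<Rightarrow> nat \<Rightarrow> real" where
  "s_gen j K x W m = esym j (eigvals (hess_mat (supp_fun K) x W m)) / real (m choose j)"

definition s_fun :: "nat \<Rightarrow> (real^'n) set \<Rightarrow> real^'n \<Rightarrow> real" where
  "s_fun j K u = s_gen j K u {x. x \<bullet> u = 0} (CARD('n) - 1)"

text \<open>s_j^{N^perp}(K,u), K viewed in N^perp, with W = N^perp \<inter> u^perp (dimension n-2).\<close>
definition s_fun_perp :: "real^'n \<Rightarrow> nat \<Rightarrow> (real^'n) set \<Rightarrow> real^'n \<Rightarrow> real" where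
  "s_fun_perp N j K u = s_gen j K u {x. x \<bullet> N = 0 \<and> x \<bullet> u = 0} (CARD('n) - 2)"

end

theory Submission
  imports Defs
begin



lemma sf_max:
  fixes K :: "(real^'n) set"
  assumes "compact K" "K \<noteq> {}"
  shows "\<exists>y0\<in>K. (\<forall>y\<in>K. x \<bullet> y \<le> x \<bullet> y0) \<and> supp_fun K x = x \<bullet> y0"
proof -
  have "compact ((\<lambda>y. x \<bullet> y) ` K)"
    by (intro compact_continuous_image continuous_intros assms)
  moreover have "(\<lambda>y. x \<bullet> y) ` K \<noteq> {}" using assms by auto
  ultimately obtain m where m: "m \<in> (\<lambda>y. x \<bullet> y) ` K" "\<forall>z\<in>(\<lambda>y. x \<bullet> y) ` K. z \<le> m"
    using compact_attains_sup by blast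
  then obtain y0 where y0: "y0 \<in> K" "m = x \<bullet> y0" by auto
  have "supp_fun K x = m" unfolding supp_fun_def using m by (intro cSup_eq_maximum) auto
  then show ?thesis using y0 m by auto
qed

lemma sf_hom:
  fixes K :: "(real^'n) set"
  assumes "compact K" "K \<noteq> {}" "0 < t"
  shows "supp_fun K (t *\<^sub>R x) = t * supp_fun K x"
proof -
  obtain y0 where y0: "y0 \<in> K" "\<forall>y\<in>K. x \<bullet> y \<le> x \<bullet> y0" "supp_fun K x = x \<bullet> y0"
    using sf_max[OF assms(1,2)] by blast
  have "supp_fun K (t *\<^sub>R x) = (t *\<^sub>R x) \<bullet> y0" unfolding supp_fun_def
    using y0 assms(3) by (intro cSup_eq_maximum) (auto intro: mult_left_mono)
  then show ?thesis using y0 by simp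
qed

lemma sf_proj:
  fixes K :: "(real^'n) set"
  assumes "K \<subseteq> {x. x \<bullet> N = 0}"
  shows "supp_fun K (x - (x \<bullet> N) *\<^sub>R N) = supp_fun K x"
proof -
  have "(\<lambda>y. (x - (x \<bullet> N) *\<^sub>R N) \<bullet> y) ` K = (\<lambda>y. x \<bullet> y) ` K"
    using assms by (intro image_cong refl) (auto simp: inner_diff_right inner_commute subset_iff)
  then show ?thesis unfolding supp_fun_def by simp
qed

lemma fd_lin:
  fixes h :: "real^'n \<Rightarrow> real"
  assumes "linear L" "\<And>x. h x = a * h (L x)" "h differentiable at (L y)"
  shows "h differentiable at y \<and> (\<forall>w. frechet_derivative h (at y) w = a * frechet_derivative h (at (L y)) (L w))"
proof -
  have D: "(h has_derivative frechet_derivative h (at (L y))) (at (L y))"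
    using assms(3) frechet_derivative_works by blast
  have BL: "bounded_linear L" using assms(1) linear_conv_bounded_linear by blast
  have "(L has_derivative L) (at y)" using BL bounded_linear_imp_has_derivative by blast
  from diff_chain_at[OF this D]
  have "((\<lambda>x. h (L x)) has_derivative (\<lambda>w. frechet_derivative h (at (L y)) (L w))) (at y)"
    by (simp add: o_def)
  then have D2: "((\<lambda>x. a * h (L x)) has_derivative (\<lambda>w. a * frechet_derivative h (at (L y)) (L w))) (at y)"
    by (rule has_derivative_mult_right)
  have E: "(\<lambda>x. a * h (L x)) = h" by (rule ext) (rule assms(2)[symmetric])
  from D2 have D3: "(h has_derivative (\<lambda>w. a * frechet_derivative h (at (L y)) (L w))) (at y)"
    unfolding E .
  then have "h differentiable at y" unfolding differentiable_def by blast
  moreover have "frechet_derivative h (at y) = (\<lambda>w. a * frechet_derivative h (at (L y)) (L w))"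
    using frechet_derivative_at[OF D3] by simp
  ultimately show ?thesis by simp
qed

lemma fd_grad:
  fixes h :: "real^'n \<Rightarrow> real"
  assumes "h differentiable at x"
  shows "frechet_derivative h (at x) w = grad h x \<bullet> w"
proof -
  have lin: "linear (frechet_derivative h (at x))" using linear_frechet_derivative[OF assms] .
  have e: "(\<Sum>i\<in>UNIV. (w$i) *\<^sub>R axis i 1) = w"
    using basis_expansion[of w] by (simp only: scalar_mult_eq_scaleR)
  have "frechet_derivative h (at x) w = frechet_derivative h (at x) (\<Sum>i\<in>UNIV. (w$i) *\<^sub>R axis i 1)"
    by (simp only: e)
  also have "\<dots> = (\<Sum>i\<in>UNIV. frechet_derivative h (at x) ((w$i) *\<^sub>R axis i 1))"
    by (rule linear_sum[OF lin])
  also have "\<dots> = (\<Sum>i\<in>UNIV. w$i * frechet_derivative h (at x) (axis i 1))"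
    by (intro sum.cong refl) (simp add: linear_scale[OF lin])
  also have "\<dots> = grad h x \<bullet> w"
    unfolding grad_def inner_vec_def by (intro sum.cong refl) simp
  finally show ?thesis .
qed

lemma DD_grad:
  fixes h :: "real^'n \<Rightarrow> real"
  assumes "twice_diff_at h x"
  shows "DD h x v w = frechet_derivative (grad h) (at x) v \<bullet> w"
proof -
  have ev: "\<forall>\<^sub>F y in at x. h differentiable at y" and hx: "h differentiable at x"
    and gx: "grad h differentiable at x" using assms unfolding twice_diff_at_def by auto
  have G: "(grad h has_derivative frechet_derivative (grad h) (at x)) (at x)"
    using gx frechet_derivative_works by blast
  have G2: "((\<lambda>y. grad h y \<bullet> w) has_derivative (\<lambda>v. frechet_derivative (grad h) (at x) v \<bullet> w)) (at x)"
    using has_derivative_inner_left[OF G] .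
  have ev2: "\<forall>\<^sub>F y in at x. grad h y \<bullet> w = frechet_derivative h (at y) w"
    using ev by eventually_elim (simp add: fd_grad)
  have G3: "((\<lambda>y. frechet_derivative h (at y) w) has_derivative (\<lambda>v. frechet_derivative (grad h) (at x) v \<bullet> w)) (at x)"
    by (rule has_derivative_transform_eventually[OF G2 ev2]) (auto simp: fd_grad hx)
  show ?thesis unfolding DD_def frechet_derivative_at[OF G3, symmetric] by simp
qed




lemma pcompose_power': "pcompose (p ^ r) q = (pcompose p q) ^ r"
  by (induct r) (auto simp: pcompose_mult pcompose_1)

lemma order_pcompose_scale:
  fixes p :: "real poly"
  assumes "p \<noteq> 0" "a \<noteq> 0"
  shows "order x (pcompose p [:0, a:]) = order (a * x) p"
proof -
  define r where "r = order (a * x) p"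
  obtain q where q: "p = [:- (a*x), 1:] ^ r * q" "\<not> [:- (a*x), 1:] dvd q"
    using order_decomp[OF assms(1)] unfolding r_def by blast
  have qa: "poly q (a * x) \<noteq> 0" using q(2) dvd_iff_poly_eq_0[of "- (a*x)" q] by simp
  define q' where "q' = pcompose q [:0, a:]"
  have q'x: "poly q' x \<noteq> 0" using qa by (simp add: q'_def poly_pcompose mult.commute)
  have lin: "[:- (a*x), a:] = Polynomial.smult a [:- x, 1:]"
    by simp
  have lin1: "pcompose [:- (a*x), 1:] [:0, a:] = [:- (a*x), a:]"
    by (simp add: pcompose_pCons)
  have "pcompose p [:0, a:] = (pcompose [:- (a*x), 1:] [:0, a:]) ^ r * q'"
    unfolding q'_def by (subst q(1)) (simp only: pcompose_mult pcompose_power')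
  also have "\<dots> = Polynomial.smult (a ^ r) ([:- x, 1:] ^ r) * q'"
    by (simp only: lin1 lin smult_power)
  finally have "pcompose p [:0, a:] = Polynomial.smult (a ^ r) ([:- x, 1:] ^ r) * q'" .
  moreover have "q' \<noteq> 0" using q'x by auto
  ultimately have "order x (pcompose p [:0, a:]) = order x ([:- x, 1:] ^ r) + order x q'"
    using assms(2) by (simp add: order_mult order_smult)
  also have "\<dots> = r" using q'x by (simp add: order_power_n_n order_0I)
  finally show ?thesis unfolding r_def .
qed

lemma char_poly_smult_eq:
  fixes A :: "real mat"
  assumes A: "A \<in> carrier_mat n n" and k: "k \<noteq> 0"
  shows "char_poly (k \<cdot>\<^sub>m A) = Polynomial.smult (k ^ n) (pcompose (char_poly A) [:0, inverse k:])"
proof -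
  have kA: "k \<cdot>\<^sub>m A \<in> carrier_mat n n" using A by simp
  have "poly (char_poly (k \<cdot>\<^sub>m A)) x = poly (Polynomial.smult (k ^ n) (pcompose (char_poly A) [:0, inverse k:])) x" for x
  proof -
    have "- char_matrix (k \<cdot>\<^sub>m A) x = k \<cdot>\<^sub>m (- char_matrix A (inverse k * x))"
      using A k by (intro eq_matI) (auto simp: char_matrix_def field_simps)
    then have "det (- char_matrix (k \<cdot>\<^sub>m A) x) = k ^ n * det (- char_matrix A (inverse k * x))"
      using A by (simp add: char_matrix_def)
    then show ?thesis using char_poly_matrix[OF kA] char_poly_matrix[OF A]
      by (simp add: poly_pcompose mult.commute)
  qed
  then show ?thesis using poly_eq_poly_eq_iff by blast
qed

lemma proots_char_poly_smult:
  fixes A :: "real mat"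
  assumes A: "A \<in> carrier_mat n n" and k: "k \<noteq> 0"
  shows "proots (char_poly (k \<cdot>\<^sub>m A)) = image_mset (\<lambda>x. k * x) (proots (char_poly A))"
proof (rule multiset_eqI)
  fix y
  have nz: "char_poly A \<noteq> 0"
    using degree_monic_char_poly[OF A] by (metis leading_coeff_0_iff zero_neq_one)
  have "count (proots (char_poly (k \<cdot>\<^sub>m A))) y = order y (pcompose (char_poly A) [:0, inverse k:])"
    using k nz by (simp add: char_poly_smult_eq[OF A k] order_smult pcompose_eq_0_iff)
  also have "\<dots> = order (y / k) (char_poly A)"
    using order_pcompose_scale[OF nz, of "inverse k" y] k by (simp add: field_simps)
  also have "\<dots> = count (image_mset (\<lambda>x. k * x) (proots (char_poly A))) y"
  proof -
    have "{x. x \<in># proots (char_poly A) \<and> y = k * x} = (if y / k \<in># proots (char_poly A) then {y/k} else {})"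
      using k by (auto simp: field_simps)
    then show ?thesis using nz by (simp add: count_image_mset' order_root)
  qed
  finally show "count (proots (char_poly (k \<cdot>\<^sub>m A))) y = count (image_mset (\<lambda>x. k * x) (proots (char_poly A))) y" .
qed




lemma esym_perm:
  assumes "mset xs = mset ys"
  shows "esym j xs = esym j ys"
proof -
  obtain p where p: "p permutes {..<length ys}" "permute_list p ys = xs"
    using mset_eq_permutation[OF assms] by blast
  have len: "length xs = length ys" using p(2) by auto
  define n where "n = length ys"
  define F where "F = {S. S \<subseteq> {..<n} \<and> card S = j}"
  have inv: "\<And>x. p (inv_into UNIV p x) = x" "\<And>x. inv_into UNIV p (p x) = x" using permutes_inverses[OF p(1)] by auto
  have injp: "inj p" using permutes_inj[OF p(1)] .
  have injip: "inj (inv_into UNIV p)" using permutes_inj[OF permutes_inv[OF p(1)]] .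
  have pin: "\<And>i. i < n \<Longrightarrow> p i < n" using p(1) n_def by (metis lessThan_iff permutes_in_image)
  have ipin: "\<And>i. i < n \<Longrightarrow> inv_into UNIV p i < n" using permutes_inv[OF p(1)] n_def by (metis lessThan_iff permutes_in_image)
  have "esym j xs = (\<Sum>S\<in>F. \<Prod>i\<in>S. ys ! p i)"
    unfolding esym_def F_def n_def len using p
    by (intro sum.cong refl prod.cong) (auto simp: permute_list_nth)
  also have "\<dots> = (\<Sum>S\<in>F. \<Prod>i\<in>p ` S. ys ! i)"
    by (intro sum.cong refl) (simp add: prod.reindex[OF inj_on_subset[OF injp]])
  also have "\<dots> = (\<Sum>T\<in>F. \<Prod>i\<in>T. ys ! i)"
  proof (rule sum.reindex_bij_witness[where i = "\<lambda>T. inv_into UNIV p ` T" and j = "\<lambda>S. p ` S"])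
    fix T assume "T \<in> F"
    show "p ` (inv_into UNIV p ` T) = T" using inv by (auto simp: image_image)
    show "inv_into UNIV p ` T \<in> F" using \<open>T \<in> F\<close> ipin
      by (auto simp: F_def card_image[OF inj_on_subset[OF injip]])
  next
    fix S assume "S \<in> F"
    show "inv_into UNIV p ` (p ` S) = S" using inv by (auto simp: image_image)
    show "p ` S \<in> F" using \<open>S \<in> F\<close> pin
      by (auto simp: F_def card_image[OF inj_on_subset[OF injp]])
    show "(\<Prod>i\<in>p ` S. ys ! i) = (\<Prod>i\<in>p ` S. ys ! i)" ..
  qed
  also have "\<dots> = esym j ys" unfolding esym_def F_def n_def ..
  finally show ?thesis .
qed

lemma esym_snoc0:
  fixes xs :: "real list"
  assumes "1 \<le> j"
  shows "esym j (xs @ [0]) = esym j xs"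
proof -
  define n where "n = length xs"
  define F where "F = {S. S \<subseteq> {..<Suc n} \<and> card S = j}"
  define G where "G = {S. S \<subseteq> {..<n} \<and> card S = j}"
  have GF: "G \<subseteq> F" unfolding F_def G_def by auto
  have finF: "finite F" unfolding F_def by (rule finite_subset[of _ "Pow {..<Suc n}"]) auto
  have "esym j (xs @ [0]) = (\<Sum>S\<in>F. \<Prod>i\<in>S. (xs @ [0]) ! i)"
    unfolding esym_def F_def n_def by simp
  also have "\<dots> = (\<Sum>S\<in>G. \<Prod>i\<in>S. (xs @ [0]) ! i)"
  proof (rule sum.mono_neutral_right[OF finF GF], rule ballI)
    fix S assume S: "S \<in> F - G"
    then have "n \<in> S" unfolding F_def G_def by (auto simp: less_Suc_eq)
    moreover have "finite S" using S unfolding F_def by (auto intro: finite_subset)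
    ultimately show "(\<Prod>i\<in>S. (xs @ [0]) ! i) = 0"
      by (intro prod_zero) (auto intro!: bexI[of _ n] simp: n_def)
  qed
  also have "\<dots> = (\<Sum>S\<in>G. \<Prod>i\<in>S. xs ! i)"
    unfolding G_def by (intro sum.cong refl prod.cong) (auto simp: nth_append n_def)
  also have "\<dots> = esym j xs" unfolding esym_def G_def n_def ..
  finally show ?thesis .
qed

lemma esym_map_mult:
  fixes xs :: "real list"
  shows "esym j (map (\<lambda>x. a * x) xs) = a ^ j * esym j xs"
  unfolding esym_def length_map sum_distrib_left
proof (intro sum.cong refl)
  fix S assume S: "S \<in> {S. S \<subseteq> {..<length xs} \<and> card S = j}"
  then have "finite S" by (auto intro: finite_subset)
  have "(\<Prod>i\<in>S. map (\<lambda>x. a * x) xs ! i) = (\<Prod>i\<in>S. a * xs ! i)"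
    using S by (intro prod.cong) auto
  also have "\<dots> = a ^ card S * (\<Prod>i\<in>S. xs ! i)" by (simp add: prod.distrib)
  finally show "(\<Prod>i\<in>S. map (\<lambda>x. a * x) (xs) ! i) = a ^ j * (\<Prod>i\<in>S. xs ! i)"
    using S by simp
qed

lemma esym_sorted_scale:
  fixes M :: "real multiset"
  assumes "1 \<le> j"
  shows "esym j (sorted_list_of_multiset ({#0#} + image_mset (\<lambda>x. a * x) M))
     = a ^ j * esym j (sorted_list_of_multiset M)"
proof -
  define ys where "ys = sorted_list_of_multiset M"
  have "mset (sorted_list_of_multiset ({#0#} + image_mset (\<lambda>x. a * x) M)) = mset (map (\<lambda>x. a * x) ys @ [0])"
    by (simp add: ys_def)
  then have "esym j (sorted_list_of_multiset ({#0#} + image_mset (\<lambda>x. a * x) M)) = esym j (map (\<lambda>x. a * x) ys @ [0])"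
    by (rule esym_perm)
  also have "\<dots> = a ^ j * esym j ys" using assms by (simp add: esym_snoc0 esym_map_mult)
  finally show ?thesis unfolding ys_def .
qed




lemma onb_expand:
  fixes g :: "nat \<Rightarrow> real^'n"
  assumes "onb U p g" "x \<in> U"
  shows "x = (\<Sum>k<p. (x \<bullet> g k) *\<^sub>R g k)"
proof -
  have gU: "span (g ` {..<p}) = U" and orth: "\<And>i k. i < p \<Longrightarrow> k < p \<Longrightarrow> g i \<bullet> g k = (if i = k then 1 else 0)"
    using assms(1) unfolding onb_def by auto
  define y where "y = x - (\<Sum>k<p. (x \<bullet> g k) *\<^sub>R g k)"
  have xs: "x \<in> span (g ` {..<p})" using assms(2) gU by simp
  have ys: "y \<in> span (g ` {..<p})" unfolding y_def
    by (intro span_diff[OF xs] span_sum span_mul span_base) auto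
  have yo: "Linear_Algebra.orthogonal y v" if vin: "v \<in> g ` {..<p}" for v
  proof -
    obtain l where l: "l < p" "v = g l" using vin by blast
    have "(\<Sum>k<p. (x \<bullet> g k) * (g k \<bullet> g l)) = (\<Sum>k<p. if k = l then x \<bullet> g l else 0)"
      using l orth by (intro sum.cong refl) auto
    also have "\<dots> = x \<bullet> g l" using l by simp
    finally have "(\<Sum>k<p. (x \<bullet> g k) * (g k \<bullet> g l)) = x \<bullet> g l" .
    then show ?thesis unfolding real_inner_class.orthogonal_def y_def l
      by (simp add: inner_diff_left inner_sum_left)
  qed
  have "Linear_Algebra.orthogonal y y" using orthogonal_to_span[OF ys yo] .
  then have "y = 0" by (simp add: real_inner_class.orthogonal_def)
  then show ?thesis unfolding y_def by simp
qed

lemma bilin_expand: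
  fixes Q :: "real^'n \<Rightarrow> real^'n \<Rightarrow> real"
  assumes "\<And>w. linear (\<lambda>v. Q v w)" "\<And>v. linear (\<lambda>w. Q v w)"
  shows "Q (\<Sum>k<p. a k *\<^sub>R g k) (\<Sum>m<p. b m *\<^sub>R g m) = (\<Sum>k<p. \<Sum>m<p. a k * Q (g k) (g m) * b m)"
proof -
  have "Q (\<Sum>k<p. a k *\<^sub>R g k) w = (\<Sum>k<p. a k * Q (g k) w)" for w
    using linear_sum[OF assms(1)[of w], of "\<lambda>k. a k *\<^sub>R g k" "{..<p}"]
    by (simp add: linear_scale[OF assms(1)])
  moreover have "Q v (\<Sum>m<p. b m *\<^sub>R g m) = (\<Sum>m<p. b m * Q v (g m))" for v
    using linear_sum[OF assms(2)[of v], of "\<lambda>m. b m *\<^sub>R g m" "{..<p}"]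
    by (simp add: linear_scale[OF assms(2)])
  ultimately show ?thesis by (simp add: sum_distrib_left mult_ac) (rule sum.swap)
qed

lemma char_poly_onb_indep:
  fixes e g :: "nat \<Rightarrow> real^'n" and Q :: "real^'n \<Rightarrow> real^'n \<Rightarrow> real"
  assumes e: "onb U p e" and g: "onb U p g"
    and lin1: "\<And>w. linear (\<lambda>v. Q v w)" and lin2: "\<And>v. linear (\<lambda>w. Q v w)"
  shows "char_poly (mat p p (\<lambda>(i,k). Q (e i) (e k))) = char_poly (mat p p (\<lambda>(i,k). Q (g i) (g k)))"
proof -
  define Om where "Om = mat p p (\<lambda>(i,k). e i \<bullet> g k)"
  define OT where "OT = transpose_mat Om"
  define Ae where "Ae = mat p p (\<lambda>(i,k). Q (e i) (e k))"
  define Ag where "Ag = mat p p (\<lambda>(i,k). Q (g i) (g k))"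
  have eU: "\<And>i. i < p \<Longrightarrow> e i \<in> U" using e unfolding onb_def by auto
  have eo: "\<And>i k. i < p \<Longrightarrow> k < p \<Longrightarrow> e i \<bullet> e k = (if i = k then 1 else 0)"
    using e unfolding onb_def by auto
  have exp: "\<And>i. i < p \<Longrightarrow> e i = (\<Sum>k<p. (e i \<bullet> g k) *\<^sub>R g k)"
    using onb_expand[OF g] eU by blast
  have C: "Om \<in> carrier_mat p p" "OT \<in> carrier_mat p p" "Ae \<in> carrier_mat p p" "Ag \<in> carrier_mat p p"
    by (auto simp: Om_def OT_def Ae_def Ag_def)
  have OOT: "Om * OT = 1\<^sub>m p"
  proof (rule eq_matI)
    fix i l assume il: "i < dim_row (1\<^sub>m p :: real mat)" "l < dim_col (1\<^sub>m p :: real mat)"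
    then have "i < p" "l < p" by auto
    have "(Om * OT) $$ (i, l) = (\<Sum>k<p. (e i \<bullet> g k) * (e l \<bullet> g k))"
      using \<open>i < p\<close> \<open>l < p\<close>
      by (simp add: Om_def OT_def scalar_prod_def atLeast0LessThan)
    also have "\<dots> = e i \<bullet> (\<Sum>k<p. (e l \<bullet> g k) *\<^sub>R g k)"
      by (simp add: inner_sum_right mult.commute)
    also have "\<dots> = e i \<bullet> e l" using exp[OF \<open>l < p\<close>] by simp
    also have "\<dots> = 1\<^sub>m p $$ (i, l)" using eo \<open>i < p\<close> \<open>l < p\<close> by simp
    finally show "(Om * OT) $$ (i, l) = 1\<^sub>m p $$ (i, l)" .
  qed (auto simp: Om_def OT_def)
  have OTO: "OT * Om = 1\<^sub>m p" using mat_mult_left_right_inverse[OF C(1) C(2) OOT] .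
  have AeO: "Ae = Om * Ag * OT"
  proof (rule eq_matI)
    fix i l assume il: "i < dim_row (Om * Ag * OT)" "l < dim_col (Om * Ag * OT)"
    then have "i < p" "l < p" using C by auto
    have "(Om * Ag * OT) $$ (i, l) = (\<Sum>m<p. (\<Sum>k<p. (e i \<bullet> g k) * Q (g k) (g m)) * (e l \<bullet> g m))"
      using \<open>i < p\<close> \<open>l < p\<close> C
      by (simp add: Om_def OT_def Ag_def scalar_prod_def atLeast0LessThan)
    also have "\<dots> = (\<Sum>k<p. \<Sum>m<p. (e i \<bullet> g k) * Q (g k) (g m) * (e l \<bullet> g m))"
      by (simp add: sum_distrib_right) (rule sum.swap)
    also have "\<dots> = Q (\<Sum>k<p. (e i \<bullet> g k) *\<^sub>R g k) (\<Sum>m<p. (e l \<bullet> g m) *\<^sub>R g m)"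
      by (rule bilin_expand[OF lin1 lin2, symmetric])
    also have "\<dots> = Ae $$ (i, l)"
      using exp[OF \<open>i < p\<close>, symmetric] exp[OF \<open>l < p\<close>, symmetric] \<open>i < p\<close> \<open>l < p\<close>
      by (simp add: Ae_def)
    finally show "Ae $$ (i, l) = (Om * Ag * OT) $$ (i, l)" by simp
  qed (use C in auto)
  have "similar_mat_wit Ae Ag Om OT"
    unfolding similar_mat_wit_def Let_def using C OOT OTO AeO by auto
  then have "similar_mat Ae Ag" unfolding similar_mat_def by blast
  from char_poly_similar[OF this] show ?thesis unfolding Ae_def Ag_def .
qed

lemma char_poly_zero_row:
  fixes Q :: "nat \<Rightarrow> nat \<Rightarrow> real"
  assumes "\<And>k. k < Suc m \<Longrightarrow> Q m k = 0"
  shows "char_poly (mat (Suc m) (Suc m) (\<lambda>(i,k). Q i k)) = monom 1 1 * char_poly (mat m m (\<lambda>(i,k). Q i k))"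
proof -
  define A where "A = mat (Suc m) (Suc m) (\<lambda>(i,k). Q i k)"
  have C: "A \<in> carrier_mat (Suc m) (Suc m)" "transpose_mat A \<in> carrier_mat (Suc m) (Suc m)"
    by (auto simp: A_def)
  have "char_poly A = char_poly (transpose_mat A)" using C by simp
  also have "\<dots> = monom 1 1 * char_poly (mat_delete (transpose_mat A) m m)"
    by (rule char_poly_0_column[OF _ C(2)]) (auto simp: A_def assms)
  also have "mat_delete (transpose_mat A) m m = transpose_mat (mat m m (\<lambda>(i,k). Q i k))"
    by (rule eq_matI) (auto simp: A_def mat_delete_def)
  also have "char_poly \<dots> = char_poly (mat m m (\<lambda>(i,k). Q i k))"
    by (rule char_poly_transpose_mat) auto
  finally show ?thesis unfolding A_def .
qed




locale setup5 =
  fixes N u :: "real^'n" and K :: "(real^'n) set"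
    and h :: "real^'n \<Rightarrow> real" and b c :: real and Pu ut :: "real^'n"
    and L :: "real^'n \<Rightarrow> real^'n"
  assumes n3: "CARD('n) \<ge> 3" and nN: "norm N = 1" and cK: "compact K" and neK: "K \<noteq> {}"
    and KN: "K \<subseteq> {x. x \<bullet> N = 0}" and nu: "norm u = 1" and uN1: "u \<noteq> N" and uN2: "u \<noteq> - N"
    and td0: "twice_diff_at (supp_fun K) ((u - (u \<bullet> N) *\<^sub>R N) /\<^sub>R norm (u - (u \<bullet> N) *\<^sub>R N))"
    and h_def: "h = supp_fun K" and b_def: "b = u \<bullet> N" and Pu_def: "Pu = u - (u \<bullet> N) *\<^sub>R N"
    and c_def: "c = norm Pu" and ut_def: "ut = Pu /\<^sub>R c"
    and L_def: "L = (\<lambda>x. (1 / c) *\<^sub>R (x - (x \<bullet> N) *\<^sub>R N))"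
begin

lemma NN: "N \<bullet> N = 1" using nN by (simp add: norm_eq_1)
lemma uu: "u \<bullet> u = 1" using nu by (simp add: norm_eq_1)

lemma Pu_nz: "Pu \<noteq> 0"
proof
  assume "Pu = 0"
  then have u: "u = b *\<^sub>R N" unfolding Pu_def b_def by simp
  then have "\<bar>b\<bar> = 1" using nu nN by simp
  then have "b = 1 \<or> b = -1" by auto
  then show False using u uN1 uN2 by auto
qed

lemma c_pos: "c > 0" using Pu_nz c_def by simp

lemma PuN: "Pu \<bullet> N = 0" unfolding Pu_def using NN by (simp add: inner_diff_left)
lemma utN: "ut \<bullet> N = 0" unfolding ut_def using PuN by simp
lemma ut_norm: "norm ut = 1" unfolding ut_def c_def using Pu_nz by simp
lemma Nut: "N \<bullet> ut = 0" using utN by (simp add: inner_commute)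
lemma utut: "ut \<bullet> ut = 1" using ut_norm by (simp add: norm_eq_1)
lemma u_decomp: "u = c *\<^sub>R ut + b *\<^sub>R N"
  unfolding ut_def Pu_def b_def using c_pos by simp
lemma cb: "c\<^sup>2 + b\<^sup>2 = 1"
proof -
  have "u \<bullet> u = c\<^sup>2 + b\<^sup>2" by (subst (1 2) u_decomp)
      (simp add: inner_add_left inner_add_right utut NN utN Nut power2_eq_square)
  then show ?thesis using uu by simp
qed
lemma u_ut: "u \<bullet> ut = c"
  by (subst u_decomp) (simp add: inner_add_left utut Nut)

lemma linL: "linear L" unfolding L_def
  by (intro linearI) (simp_all add: inner_add_left algebra_simps)
lemma blL: "bounded_linear L" using linL linear_conv_bounded_linear by blast
lemma Lu: "L u = ut" unfolding L_def ut_def Pu_def by (simp add: inverse_eq_divide)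

lemma td: "twice_diff_at h ut" using td0 unfolding h_def ut_def Pu_def c_def .

lemma ev_nhds_at: assumes "eventually P (nhds x)" shows "eventually P (at x)"
  using assms unfolding eventually_at_filter by (rule eventually_mono) simp

lemma h_L: "h x = c * h (L x)"
proof -
  have "h x = h (x - (x \<bullet> N) *\<^sub>R N)" unfolding h_def using sf_proj[OF KN] by simp
  also have "x - (x \<bullet> N) *\<^sub>R N = c *\<^sub>R L x" unfolding L_def using c_pos by simp
  also have "h (c *\<^sub>R L x) = c * h (L x)" unfolding h_def using sf_hom[OF cK neK c_pos] .
  finally show ?thesis .
qed

lemma ev_ut: "\<forall>\<^sub>F y in nhds ut. h differentiable at y"
proof -
  have "\<forall>\<^sub>F y in at ut. h differentiable at y" "h differentiable at ut"
    using td unfolding twice_diff_at_def by auto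
  then show ?thesis unfolding eventually_at_filter by (auto elim: eventually_mono)
qed

lemma ev_u: "\<forall>\<^sub>F y in nhds u. h differentiable at (L y)"
proof -
  obtain S where S: "open S" "ut \<in> S" "\<forall>x\<in>S. h differentiable at x"
    using ev_ut unfolding eventually_nhds by blast
  have "open (L -` S)" using S(1) linear_continuous_at[OF blL] by (rule continuous_open_vimage)
  moreover have "u \<in> L -` S" using S(2) Lu by simp
  ultimately show ?thesis unfolding eventually_nhds using S(3) by blast
qed

lemma ev_fd: "\<forall>\<^sub>F y in nhds u. h differentiable at y \<and>
   (\<forall>w. frechet_derivative h (at y) w = c * (grad h (L y) \<bullet> L w))"
  using ev_u
proof eventually_elim
  case (elim y)
  from fd_lin[OF linL h_L elim] show ?case by (simp add: fd_grad[OF elim])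
qed

lemma diff_transform_ev:
  fixes f g :: "real^'n \<Rightarrow> 'b::real_normed_vector"
  assumes "f differentiable at x" "\<forall>\<^sub>F y in nhds x. f y = g y"
  shows "g differentiable at x"
proof -
  obtain D where D: "(f has_derivative D) (at x)" using assms(1) unfolding differentiable_def by blast
  have "(g has_derivative D) (at x)"
    by (rule has_derivative_transform_eventually[OF D ev_nhds_at[OF assms(2)] eventually_nhds_x_imp_x[OF assms(2)]]) simp
  then show ?thesis unfolding differentiable_def by blast
qed

definition M :: "real^'n \<Rightarrow> real^'n" where
  "M g = (\<chi> k. c * (g \<bullet> L (axis k 1)))"

lemma linM: "linear M" unfolding M_def
  by (intro linearI) (simp_all add: Finite_Cartesian_Product.vec_eq_iff inner_add_left algebra_simps)

lemma grad_u_ev: "\<forall>\<^sub>F y in nhds u. grad h y = M (grad h (L y))"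
  using ev_fd by eventually_elim (simp add: grad_def M_def)

lemma td_u: "twice_diff_at h u"
proof -
  have a: "\<forall>\<^sub>F y in nhds u. h differentiable at y" using ev_fd by (auto elim: eventually_mono)
  have b: "\<forall>\<^sub>F y in at u. h differentiable at y" using ev_nhds_at[OF a] .
  have d: "h differentiable at u" using eventually_nhds_x_imp_x[OF a] .
  have g1: "grad h differentiable at (L u)" using td unfolding twice_diff_at_def Lu by blast
  have g2: "(grad h \<circ> L) differentiable at u"
    by (rule differentiable_chain_at[OF bounded_linear_imp_differentiable[OF blL] g1])
  have g3: "(M \<circ> (grad h \<circ> L)) differentiable at u"
    by (rule differentiable_chain_at[OF g2 bounded_linear_imp_differentiable])
       (use linM linear_conv_bounded_linear in blast)
  have ev: "\<forall>\<^sub>F y in nhds u. (M \<circ> (grad h \<circ> L)) y = grad h y"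
    using grad_u_ev by (rule eventually_mono) simp
  have g: "grad h differentiable at u" by (rule diff_transform_ev[OF g3 ev])
  show ?thesis unfolding twice_diff_at_def by (intro conjI b d g)
qed

definition H where "H = frechet_derivative (grad h) (at ut)"

lemma H_deriv: "(grad h has_derivative H) (at ut)"
  unfolding H_def using td frechet_derivative_works unfolding twice_diff_at_def by blast

lemma linH: "linear H" using has_derivative_linear[OF H_deriv] .

lemma DD_u: "DD h u v w = c * (H (L v) \<bullet> L w)"
proof -
  have D0: "(grad h has_derivative H) (at (L u))" unfolding Lu by (rule H_deriv)
  have D1: "((grad h \<circ> L) has_derivative (H \<circ> L)) (at u)"
    by (rule diff_chain_at[OF bounded_linear_imp_has_derivative[OF blL] D0])
  have D1': "((\<lambda>y. grad h (L y) \<bullet> L w) has_derivative (\<lambda>v. H (L v) \<bullet> L w)) (at u)"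
    using has_derivative_inner_left[OF D1, of "L w"] by (simp only: o_def)
  have D2: "((\<lambda>y. c * (grad h (L y) \<bullet> L w)) has_derivative (\<lambda>v. c * (H (L v) \<bullet> L w))) (at u)"
    by (rule has_derivative_mult_right[OF D1'])
  have ev: "\<forall>\<^sub>F y in nhds u. c * (grad h (L y) \<bullet> L w) = frechet_derivative h (at y) w"
    using ev_fd by (rule eventually_mono) simp
  have D3: "((\<lambda>y. frechet_derivative h (at y) w) has_derivative (\<lambda>v. c * (H (L v) \<bullet> L w))) (at u)"
    by (rule has_derivative_transform_eventually[OF D2 ev_nhds_at[OF ev] eventually_nhds_x_imp_x[OF ev]]) simp
  show ?thesis unfolding DD_def frechet_derivative_at[OF D3, symmetric] by simp
qed

lemma DD_ut: "DD h ut v w = H v \<bullet> w" unfolding H_def using DD_grad[OF td] .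

lemma grad_scale:
  assumes "h differentiable at y" "0 < s"
  shows "grad h (s *\<^sub>R y) = grad h y"
proof -
  have lin: "linear (scaleR (1/s) :: real^'n \<Rightarrow> real^'n)" by (simp add: linearI scaleR_add_right)
  have hs: "h x = s * h ((1/s) *\<^sub>R x)" for x
    unfolding h_def using sf_hom[OF cK neK, of s "(1/s) *\<^sub>R x"] assms(2) by simp
  have "h differentiable at (s *\<^sub>R y) \<and> (\<forall>w. frechet_derivative h (at (s *\<^sub>R y)) w = s * frechet_derivative h (at ((1/s) *\<^sub>R (s *\<^sub>R y))) ((1/s) *\<^sub>R w))"
    by (rule fd_lin[where L="scaleR (1/s)" and h=h and a=s and y="s *\<^sub>R y", OF lin hs]) (use assms in simp)
  then have "frechet_derivative h (at (s *\<^sub>R y)) w = frechet_derivative h (at y) w" for w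
    using assms linear_scale[OF linear_frechet_derivative[OF assms(1)]] by simp
  then show ?thesis unfolding grad_def by simp
qed

lemma H_ut: "H ut = 0"
proof -
  have hd: "h differentiable at ut" using td unfolding twice_diff_at_def by blast
  have g: "((\<lambda>t::real. (1 + t) *\<^sub>R ut) has_derivative (\<lambda>t. t *\<^sub>R ut)) (at 0)"
    by (auto intro!: derivative_eq_intros)
  have D1: "((grad h \<circ> (\<lambda>t::real. (1 + t) *\<^sub>R ut)) has_derivative (H \<circ> (\<lambda>t. t *\<^sub>R ut))) (at 0)"
    by (rule diff_chain_at[OF g]) (simp add: H_deriv)
  have D2: "((\<lambda>t::real. grad h ut) has_derivative (\<lambda>t. 0)) (at 0)" by simp
  have D3: "((grad h \<circ> (\<lambda>t::real. (1 + t) *\<^sub>R ut)) has_derivative (\<lambda>t. 0)) (at 0)"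
  proof (rule has_derivative_transform_within[where d=1 and s=UNIV, OF D2])
    show "(0::real) < 1" by simp
    show "(0::real) \<in> UNIV" by simp
    fix t :: real assume "t \<in> UNIV" "dist t 0 < 1"
    then have "0 < 1 + t" by (simp add: dist_real_def)
    then show "grad h ut = (grad h \<circ> (\<lambda>t. (1 + t) *\<^sub>R ut)) t" using grad_scale[OF hd] by simp
  qed
  have "(H \<circ> (\<lambda>t. t *\<^sub>R ut)) = (\<lambda>t::real. 0)" using has_derivative_unique[OF D1 D3] .
  then have "H (1 *\<^sub>R ut) = 0" by (metis comp_apply)
  then show ?thesis by simp
qed

end

lemma onb_from_orth:
  fixes g :: "nat \<Rightarrow> real^'n"
  assumes S: "subspace S" and d: "dim S = p" and gS: "\<And>i. i < p \<Longrightarrow> g i \<in> S"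
    and go: "\<And>i k. i < p \<Longrightarrow> k < p \<Longrightarrow> g i \<bullet> g k = (if i = k then 1 else 0)"
  shows "onb S p g"
proof -
  define B where "B = g ` {..<p}"
  have BS: "B \<subseteq> S" using gS B_def by auto
  have inj: "inj_on g {..<p}"
  proof (rule inj_onI)
    fix i k assume "i \<in> {..<p}" "k \<in> {..<p}" "g i = g k"
    then have "g i \<bullet> g k = 1" using go[of i i] by simp
    then show "i = k" using go[of i k] \<open>i \<in> {..<p}\<close> \<open>k \<in> {..<p}\<close> by (auto split: if_splits)
  qed
  have cardB: "card B = p" unfolding B_def using card_image[OF inj] by simp
  have po: "pairwise real_inner_class.orthogonal B" unfolding B_def pairwise_def real_inner_class.orthogonal_def
    using go by auto
  have z: "0 \<notin> B" unfolding B_def using go by force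
  have ind: "independent B" by (rule pairwise_orthogonal_independent[OF po z])
  have "S \<subseteq> span B" by (rule card_ge_dim_independent[OF BS ind]) (simp add: d cardB)
  moreover have "span B \<subseteq> S" using BS S by (simp add: span_minimal)
  ultimately have "span B = S" by blast
  then show ?thesis unfolding onb_def B_def using gS go by auto
qed

lemma onb_exists:
  fixes S :: "(real^'n) set"
  assumes S: "subspace S" and d: "dim S = p"
  shows "\<exists>e. onb S p e"
proof -
  obtain B where B: "B \<subseteq> S" "pairwise real_inner_class.orthogonal B" "\<And>x. x \<in> B \<Longrightarrow> norm x = 1"
    "independent B" "card B = dim S" "span B = S"
    using orthonormal_basis_subspace[OF S] by metis
  have fin: "finite B" using B(4) independent_imp_finite by blast
  obtain e where e: "bij_betw e {0..<card B} B" using ex_bij_betw_nat_finite[OF fin] by blast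
  have img: "e ` {..<p} = B" using e B(5) d by (simp add: bij_betw_def atLeast0LessThan)
  have inj: "inj_on e {..<p}" using e B(5) d by (simp add: bij_betw_def atLeast0LessThan)
  have "onb S p e"
    unfolding onb_def
  proof (intro conjI allI impI)
    fix i assume "i < p" then show "e i \<in> S" using img B(1) by auto
  next
    fix i k assume ik: "i < p" "k < p"
    show "e i \<bullet> e k = (if i = k then 1 else 0)"
    proof (cases "i = k")
      case True
      then have "norm (e i) = 1" using B(3) img ik by auto
      then show ?thesis using True by (simp add: norm_eq_1)
    next
      case False
      then have "e i \<noteq> e k" using inj ik by (auto dest: inj_onD)
      moreover have "e i \<in> B" "e k \<in> B" using img ik by auto
      ultimately have "e i \<bullet> e k = 0" using B(2) unfolding pairwise_def real_inner_class.orthogonal_def by blast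
      then show ?thesis using False by simp
    qed
  next
    show "span (e ` {..<p}) = S" using img B(6) by simp
  qed
  then show ?thesis by blast
qed

lemma arith_aux:
  fixes a p n q c E :: real
  assumes "a * p = n * q" "q > 0" "p > 0" "n > 0" "c > 0"
  shows "a / n / c ^ j * (E / q) = (1 / c) ^ j * E / p"
proof -
  have "a / n / c ^ j * (E / q) = E / c ^ j * (a / (n * q))" by (simp add: mult_ac)
  also have "a / (n * q) = 1 / p" using assms by (simp add: field_simps)
  finally show ?thesis by (simp add: power_one_over)
qed

lemma char_poly_nz:
  fixes A :: "real mat"
  assumes "A \<in> carrier_mat n n"
  shows "char_poly A \<noteq> 0"
  using degree_monic_char_poly[OF assms] by (metis leading_coeff_0_iff zero_neq_one)

context setup5
begin

definition U where "U = {x. x \<bullet> u = 0}"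
definition W where "W = {x. x \<bullet> N = 0 \<and> x \<bullet> ut = 0}"
definition m where "m = CARD('n) - 2"
definition z where "z = b *\<^sub>R ut - c *\<^sub>R N"

lemma card_m: "CARD('n) - 1 = Suc m" unfolding m_def using n3 by simp

lemma subU: "subspace U" unfolding U_def by (auto simp: subspace_def inner_add_left)
lemma subW: "subspace W" unfolding W_def by (auto simp: subspace_def inner_add_left)

lemma dimU: "dim U = Suc m"
proof -
  have "U = {x. u \<bullet> x = 0}" unfolding U_def by (simp add: inner_commute)
  moreover have "u \<noteq> 0" using nu by auto
  ultimately show ?thesis using dim_hyperplane[of u] card_m by simp
qed

lemma dimW: "dim W = m"
proof -
  define A where "A = span {N, ut}"
  have "N \<noteq> ut" using NN Nut by auto
  have po: "pairwise real_inner_class.orthogonal {N, ut}"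
    unfolding pairwise_def real_inner_class.orthogonal_def using Nut utN by auto
  have z0: "0 \<notin> {N, ut}" using NN utut by auto
  have ind: "independent {N, ut}" by (rule pairwise_orthogonal_independent[OF po z0])
  have dA: "dim A = 2" unfolding A_def using dim_span_eq_card_independent[OF ind] \<open>N \<noteq> ut\<close> by simp
  have eq: "{y \<in> UNIV. \<forall>x \<in> A. real_inner_class.orthogonal x y} = W"
  proof (rule subset_antisym)
    show "{y \<in> UNIV. \<forall>x \<in> A. real_inner_class.orthogonal x y} \<subseteq> W"
    proof
      fix y assume "y \<in> {y \<in> UNIV. \<forall>x \<in> A. real_inner_class.orthogonal x y}"
      then have "real_inner_class.orthogonal N y" "real_inner_class.orthogonal ut y" unfolding A_def by (auto intro: span_base)
      then show "y \<in> W" unfolding W_def real_inner_class.orthogonal_def by (simp add: inner_commute)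
    qed
    show "W \<subseteq> {y \<in> UNIV. \<forall>x \<in> A. real_inner_class.orthogonal x y}"
    proof
      fix y assume "y \<in> W"
      then have "real_inner_class.orthogonal y x" if "x \<in> {N, ut}" for x
        using that unfolding W_def real_inner_class.orthogonal_def by auto
      then have "real_inner_class.orthogonal y x" if "x \<in> A" for x
        using that orthogonal_to_span unfolding A_def by blast
      then show "y \<in> {y \<in> UNIV. \<forall>x \<in> A. real_inner_class.orthogonal x y}" by (simp add: orthogonal_commute)
    qed
  qed
  have "dim {y \<in> UNIV. \<forall>x \<in> A. real_inner_class.orthogonal x y} + dim A = dim (UNIV :: (real^'n) set)"
    by (rule dim_subspace_orthogonal_to_vectors) (auto simp: A_def)
  then have "dim W + 2 = CARD('n)" using eq dA by simp
  then show ?thesis unfolding m_def by simp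
qed

definition e where "e = (SOME e. onb U (Suc m) e)"
definition f where "f = (SOME f. onb W m f)"
definition g where "g = (\<lambda>i. if i < m then f i else z)"

lemma e_onb: "onb U (Suc m) e"
  unfolding e_def using onb_exists[OF subU dimU] by (rule someI_ex)
lemma f_onb: "onb W m f"
  unfolding f_def using onb_exists[OF subW dimW] by (rule someI_ex)

lemma fW: "i < m \<Longrightarrow> f i \<bullet> N = 0 \<and> f i \<bullet> ut = 0"
  using f_onb unfolding onb_def W_def by auto

lemma zN: "z \<bullet> N = - c" unfolding z_def by (simp add: inner_diff_left utN NN)
lemma zut: "z \<bullet> ut = b" unfolding z_def by (simp add: inner_diff_left utut Nut)

lemma g_onb: "onb U (Suc m) g"
proof (rule onb_from_orth[OF subU dimU])
  fix i assume i: "i < Suc m"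
  show "g i \<in> U"
  proof (cases "i < m")
    case True
    then show ?thesis unfolding g_def U_def using fW[OF True]
      by (subst u_decomp) (simp add: inner_add_right inner_commute)
  next
    case False
    have "z \<bullet> u = c * b - b * c" 
      by (subst u_decomp) (simp add: inner_add_right zN zut)
    then show ?thesis using False unfolding g_def U_def by simp
  qed
next
  fix i k assume ik: "i < Suc m" "k < Suc m"
  have zz: "z \<bullet> z = 1"
  proof -
    have "z \<bullet> z = b * (z \<bullet> ut) - c * (z \<bullet> N)"
      by (subst (2) z_def) (simp add: inner_diff_right inner_commute)
    also have "\<dots> = b\<^sup>2 + c\<^sup>2" by (simp add: zN zut power2_eq_square)
    finally show ?thesis using cb by simp
  qed
  have fz: "i < m \<Longrightarrow> f i \<bullet> z = 0" for i
    using fW unfolding z_def by (simp add: inner_diff_right)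
  have ff: "i < m \<Longrightarrow> k < m \<Longrightarrow> f i \<bullet> f k = (if i = k then 1 else 0)" for i k
    using f_onb unfolding onb_def by auto
  show "g i \<bullet> g k = (if i = k then 1 else 0)"
    using ik fz[of i] fz[of k] ff[of i k] zz
    by (cases "i < m"; cases "k < m") (auto simp: g_def inner_commute less_Suc_eq)
qed

definition Q1 where "Q1 = DD h u"

lemma Q1_eq: "Q1 v w = c * (H (L v) \<bullet> L w)" unfolding Q1_def by (rule DD_u)

lemma Q1_lin1: "linear (\<lambda>v. Q1 v w)"
  unfolding Q1_eq
  by (intro linearI) (simp_all add: linear_add[OF linL] linear_add[OF linH] linear_scale[OF linL]
      linear_scale[OF linH] inner_add_left algebra_simps)

lemma Q1_lin2: "linear (\<lambda>w. Q1 v w)"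
  unfolding Q1_eq
  by (intro linearI) (simp_all add: linear_add[OF linL] linear_scale[OF linL] inner_add_right algebra_simps)

lemma Lz: "L z = (b / c) *\<^sub>R ut"
proof -
  have "z - (z \<bullet> N) *\<^sub>R N = b *\<^sub>R ut" unfolding zN by (simp add: z_def)
  then show ?thesis unfolding L_def by simp
qed

lemma Q1_z: "Q1 z w = 0"
  unfolding Q1_eq Lz linear_scale[OF linH] H_ut by simp

lemma Lf: "i < m \<Longrightarrow> L (f i) = (1 / c) *\<^sub>R f i"
  unfolding L_def using fW by simp

lemma Q1_f: "i < m \<Longrightarrow> k < m \<Longrightarrow> Q1 (f i) (f k) = (1 / c) * DD h ut (f i) (f k)"
  unfolding Q1_eq DD_ut using c_pos by (simp add: Lf linear_scale[OF linH])

definition Bm where "Bm = mat m m (\<lambda>(i,k). DD h ut (f i) (f k))"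

lemma hess_u: "hess_mat h u U (Suc m) = mat (Suc m) (Suc m) (\<lambda>(i,k). Q1 (e i) (e k))"
  unfolding hess_mat_def e_def Q1_def Let_def ..

lemma hess_ut: "hess_mat h ut W m = Bm"
  unfolding hess_mat_def f_def Bm_def Let_def ..

lemma proots_u:
  "proots (char_poly (hess_mat h u U (Suc m))) = {#0#} + image_mset (\<lambda>x. (1/c) * x) (proots (char_poly Bm))"
proof -
  have Bc: "Bm \<in> carrier_mat m m" unfolding Bm_def by simp
  have "char_poly (hess_mat h u U (Suc m)) = char_poly (mat (Suc m) (Suc m) (\<lambda>(i,k). Q1 (g i) (g k)))"
    unfolding hess_u by (rule char_poly_onb_indep[OF e_onb g_onb Q1_lin1 Q1_lin2])
  also have "\<dots> = monom 1 1 * char_poly (mat m m (\<lambda>(i,k). Q1 (g i) (g k)))"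
    by (rule char_poly_zero_row) (simp add: g_def Q1_z)
  also have "mat m m (\<lambda>(i,k). Q1 (g i) (g k)) = (1/c) \<cdot>\<^sub>m Bm"
    by (rule eq_matI) (auto simp: g_def Bm_def Q1_f)
  finally have cp: "char_poly (hess_mat h u U (Suc m)) = monom 1 1 * char_poly ((1/c) \<cdot>\<^sub>m Bm)" .
  have nz1: "(monom 1 1 :: real poly) \<noteq> 0" by simp
  have nz2: "char_poly ((1/c) \<cdot>\<^sub>m Bm) \<noteq> 0" by (rule char_poly_nz[of _ m]) (simp add: Bc)
  have pm0: "proots (monom 1 1 :: real poly) = proots [:0, 1:]" by (simp only: x_as_monom)
  have pm: "proots (monom 1 1 :: real poly) = {#0#}"
    unfolding pm0 using proots_linear_factor[of "0::real"] by simp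
  show ?thesis unfolding cp proots_mult[OF nz1 nz2] pm
    using proots_char_poly_smult[OF Bc, of "1/c"] c_pos by simp
qed

lemma main_eq:
  assumes j1: "1 \<le> j" and j2: "j \<le> CARD('n) - 2"
  shows "s_fun j K u = (1 - real j / real (CARD('n) - 1)) / (u \<bullet> ut) ^ j * s_fun_perp N j K ut"
proof -
  define E where "E = esym j (eigvals Bm)"
  have hK: "supp_fun K = h" using h_def by simp
  have "esym j (eigvals (hess_mat h u U (Suc m))) = (1/c) ^ j * E"
    unfolding eigvals_def proots_u E_def using esym_sorted_scale[OF j1] by simp
  then have su: "s_fun j K u = (1/c) ^ j * E / real (Suc m choose j)"
    unfolding s_fun_def s_gen_def hK card_m U_def[symmetric] by simp
  have sp: "s_fun_perp N j K ut = E / real (m choose j)"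
    unfolding s_fun_perp_def s_gen_def hK m_def[symmetric] W_def[symmetric] hess_ut E_def ..
  have jm: "j \<le> m" using j2 m_def by simp
  have bin: "real (Suc m - j) * real (Suc m choose j) = real (Suc m) * real (m choose j)"
    using binomial_absorb_comp[of "Suc m" j] by (metis diff_Suc_1 of_nat_mult)
  have pos1: "real (m choose j) > 0" using jm by simp
  have pos2: "real (Suc m choose j) > 0" using jm by simp
  have pos3: "real (Suc m - j) > 0" using jm by simp
  have "1 - real j / real (Suc m) = real (Suc m - j) / real (Suc m)"
    using jm by (simp add: field_simps of_nat_diff)
  then have "(1 - real j / real (CARD('n) - 1)) / (u \<bullet> ut) ^ j * s_fun_perp N j K ut
      = real (Suc m - j) / real (Suc m) / c ^ j * (E / real (m choose j))"
    unfolding card_m u_ut sp by simp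
  also have "\<dots> = (1/c) ^ j * E / real (Suc m choose j)"
    by (rule arith_aux[OF bin pos1 pos2 _ c_pos]) simp
  finally show ?thesis using su by simp
qed

end


theorem proposition5p5:
  fixes N u :: "real^'n" and K :: "(real^'n) set" and j :: nat
  assumes "CARD('n) \<ge> 3"
    and "1 \<le> j" and "j \<le> CARD('n) - 2"
    and "norm N = 1"
    and "compact K" and "convex K" and "K \<noteq> {}" and "K \<subseteq> {x. x \<bullet> N = 0}"
    and "norm u = 1" and "u \<noteq> N" and "u \<noteq> - N"
    and "twice_diff_at (supp_fun K)
           ((u - (u \<bullet> N) *\<^sub>R N) /\<^sub>R norm (u - (u \<bullet> N) *\<^sub>R N))"
  shows "twice_diff_at (supp_fun K) u \<and>
    s_fun j K u =
      (1 - real j / real (CARD('n) - 1))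
        / (u \<bullet> ((u - (u \<bullet> N) *\<^sub>R N) /\<^sub>R norm (u - (u \<bullet> N) *\<^sub>R N))) ^ j
        * s_fun_perp N j K ((u - (u \<bullet> N) *\<^sub>R N) /\<^sub>R norm (u - (u \<bullet> N) *\<^sub>R N))"
proof -
  interpret S: setup5 N u K "supp_fun K" "u \<bullet> N" "norm (u - (u \<bullet> N) *\<^sub>R N)"
    "u - (u \<bullet> N) *\<^sub>R N" "(u - (u \<bullet> N) *\<^sub>R N) /\<^sub>R norm (u - (u \<bullet> N) *\<^sub>R N)"
    "\<lambda>x. (1 / norm (u - (u \<bullet> N) *\<^sub>R N)) *\<^sub>R (x - (x \<bullet> N) *\<^sub>R N)"
    using assms by unfold_locales auto
  show ?thesis using S.td_u S.main_eq[OF assms(2,3)] by simp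
qed

end
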